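(* Let $n\ge1$, let $\mu_n$ be a finite positive regular Borel measure on a compact set, $\phi_n,\phi^n_{ij}\in L^\infty(\mu_n)$ for $1\le i<j\le n$, and let $A_n$ be the operator on $L^2(\mu_n)^{(n)}$ given by the upper triangular $n\times n$ operator matrix with all diagonal entries $M_{\phi_n}$ and $(i,j)$ entry $M_{\phi^n_{ij}}$ for $i<j$, and suppose $A_n$ is a direct integral of strongly irreducible operators. If $M_{\phi^n_{i,i+1}}$ is invertible in $\mathscr{L}(L^2(\mu_n))$ for each $i=1,\dots,n-1$, then there is an invertible operator $X_n\in\mathscr{L}(L^2(\mu_n)^{(n)})$ such that $X_nA_nX_n^{-1}$ is the $n\times n$ operator matrix with all diagonal entries $M_{\phi_n}$, all superdiagonal entries ($(i,i+1)$ entries) equal to the identity $I$, and all other entries $0$.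
   Context: $M_\phi$ denotes the multiplication operator $f\mapsto\phi f$ on $L^2(\mu_n)$. An operator is strongly irreducible if its commutant contains no idempotents other than $0$ and $I$; "$A_n$ is a direct integral of strongly irreducible operators" means the fibre matrix (upper triangular with diagonal $\phi_n(\lambda)$ and entries $\phi^n_{ij}(\lambda)$) is strongly irreducible for a.e. $\lambda$. *)

theory Defs
  imports "HOL-Analysis.Analysis"
begin

text \<open>Vectors in L^2(mu)^(n) are represented by functions f :: 'a => nat => complex,
  component i (for i < n, 0-based) being the function x |-> f x i.
  Everything is taken modulo mu-a.e. equality of the components i < n.\<close>

definition L2vec :: "'a measure \<Rightarrow> nat \<Rightarrow> ('a \<Rightarrow> nat \<Rightarrow> complex) set" where
  "L2vec \<mu> n = {f. \<forall>i<n. (\<lambda>x. f x i) \<in> borel_measurable \<mu> \<and>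
                        integrable \<mu> (\<lambda>x. (cmod (f x i))\<^sup>2)}"

definition L2eqv :: "'a measure \<Rightarrow> nat \<Rightarrow> ('a \<Rightarrow> nat \<Rightarrow> complex) \<Rightarrow> ('a \<Rightarrow> nat \<Rightarrow> complex) \<Rightarrow> bool" where
  "L2eqv \<mu> n f g \<longleftrightarrow> (\<forall>i<n. AE x in \<mu>. f x i = g x i)"

definition L2norm :: "'a measure \<Rightarrow> nat \<Rightarrow> ('a \<Rightarrow> nat \<Rightarrow> complex) \<Rightarrow> real" where
  "L2norm \<mu> n f = sqrt (\<Sum>i<n. \<integral>x. (cmod (f x i))\<^sup>2 \<partial>\<mu>)"

type_synonym 'a op = "('a \<Rightarrow> nat \<Rightarrow> complex) \<Rightarrow> ('a \<Rightarrow> nat \<Rightarrow> complex)"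

definition bounded_op :: "'a measure \<Rightarrow> nat \<Rightarrow> 'a op \<Rightarrow> bool" where
  "bounded_op \<mu> n T \<longleftrightarrow>
     (\<forall>f\<in>L2vec \<mu> n. T f \<in> L2vec \<mu> n) \<and>
     (\<forall>f\<in>L2vec \<mu> n. \<forall>g\<in>L2vec \<mu> n. L2eqv \<mu> n f g \<longrightarrow> L2eqv \<mu> n (T f) (T g)) \<and>
     (\<forall>f\<in>L2vec \<mu> n. \<forall>g\<in>L2vec \<mu> n. \<forall>a b::complex.
        L2eqv \<mu> n (T (\<lambda>x i. a * f x i + b * g x i)) (\<lambda>x i. a * T f x i + b * T g x i)) \<and>
     (\<exists>C. \<forall>f\<in>L2vec \<mu> n. L2norm \<mu> n (T f) \<le> C * L2norm \<mu> n f)"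

definition op_eq :: "'a measure \<Rightarrow> nat \<Rightarrow> 'a op \<Rightarrow> 'a op \<Rightarrow> bool" where
  "op_eq \<mu> n S T \<longleftrightarrow> (\<forall>f\<in>L2vec \<mu> n. L2eqv \<mu> n (S f) (T f))"

definition invertible_op :: "'a measure \<Rightarrow> nat \<Rightarrow> 'a op \<Rightarrow> bool" where
  "invertible_op \<mu> n T \<longleftrightarrow> bounded_op \<mu> n T \<and>
     (\<exists>S. bounded_op \<mu> n S \<and> op_eq \<mu> n (T \<circ> S) id \<and> op_eq \<mu> n (S \<circ> T) id)"

definition mult_opmat :: "nat \<Rightarrow> (nat \<Rightarrow> nat \<Rightarrow> 'a \<Rightarrow> complex) \<Rightarrow> 'a op" where
  "mult_opmat n E = (\<lambda>f x i. \<Sum>j<n. E i j x * f x j)"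

text \<open>Multiplication operator M_phi on L^2(mu) (= L^2(mu)^(1)).\<close>
definition mult_op :: "('a \<Rightarrow> complex) \<Rightarrow> 'a op" where
  "mult_op \<phi> = mult_opmat 1 (\<lambda>_ _. \<phi>)"

definition Linfty :: "'a measure \<Rightarrow> ('a \<Rightarrow> complex) set" where
  "Linfty \<mu> = {\<phi>. \<phi> \<in> borel_measurable \<mu> \<and> (\<exists>C. AE x in \<mu>. cmod (\<phi> x) \<le> C)}"

definition regular_borel_on :: "'a::topological_space set \<Rightarrow> 'a measure \<Rightarrow> bool" where
  "regular_borel_on K \<mu> \<longleftrightarrow> sets \<mu> = sets (restrict_space borel K) \<and>
     (\<forall>A\<in>sets \<mu>.
        emeasure \<mu> A = (SUP C\<in>{C. compact C \<and> C \<subseteq> A}. emeasure \<mu> C) \<and>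
        emeasure \<mu> A = (INF U\<in>{U. open U \<and> A \<subseteq> U}. emeasure \<mu> (U \<inter> K)))"

text \<open>Finite complex matrices as nat => nat => complex, indices < n.\<close>
definition mmul :: "nat \<Rightarrow> (nat \<Rightarrow> nat \<Rightarrow> complex) \<Rightarrow> (nat \<Rightarrow> nat \<Rightarrow> complex) \<Rightarrow> nat \<Rightarrow> nat \<Rightarrow> complex" where
  "mmul n A B = (\<lambda>i j. \<Sum>k<n. A i k * B k j)"

definition meq :: "nat \<Rightarrow> (nat \<Rightarrow> nat \<Rightarrow> complex) \<Rightarrow> (nat \<Rightarrow> nat \<Rightarrow> complex) \<Rightarrow> bool" where
  "meq n A B \<longleftrightarrow> (\<forall>i<n. \<forall>j<n. A i j = B i j)"

definition strongly_irreducible :: "nat \<Rightarrow> (nat \<Rightarrow> nat \<Rightarrow> complex) \<Rightarrow> bool" where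
  "strongly_irreducible n M \<longleftrightarrow>
     (\<forall>P. meq n (mmul n P M) (mmul n M P) \<and> meq n (mmul n P P) P \<longrightarrow>
          meq n P (\<lambda>_ _. 0) \<or> meq n P (\<lambda>i j. if i = j then 1 else 0))"

end

theory Submission imports Defs "Jordan_Normal_Form.Determinant" begin

lemma Linfty_const: "(\<lambda>x. c) \<in> Linfty \<mu>"
  unfolding Linfty_def by (auto intro!: exI[of _ "cmod c"])

lemma Linfty_bound: "f \<in> Linfty \<mu> \<Longrightarrow> \<exists>C\<ge>0. AE x in \<mu>. cmod (f x) \<le> C"
  unfolding Linfty_def
  proof (elim CollectE conjE exE)
  fix C assume "AE x in \<mu>. cmod (f x) \<le> C"
  then show ?thesis by (intro exI[of _ "max C 0"]) (auto elim!: eventually_mono)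
qed

lemma Linfty_meas: "f \<in> Linfty \<mu> \<Longrightarrow> f \<in> borel_measurable \<mu>"
  unfolding Linfty_def by auto

lemma Linfty_add:
  assumes "f \<in> Linfty \<mu>" "g \<in> Linfty \<mu>" shows "(\<lambda>x. f x + g x) \<in> Linfty \<mu>"
proof -
  obtain C D where C: "AE x in \<mu>. cmod (f x) \<le> C" and D: "AE x in \<mu>. cmod (g x) \<le> D"
    using assms unfolding Linfty_def by auto
  have "AE x in \<mu>. cmod (f x + g x) \<le> C + D"
    using C D by eventually_elim (meson add_mono norm_triangle_ineq order_trans)
  then show ?thesis using assms unfolding Linfty_def by auto
qed

lemma Linfty_mult:
  assumes "f \<in> Linfty \<mu>" "g \<in> Linfty \<mu>" shows "(\<lambda>x. f x * g x) \<in> Linfty \<mu>"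
proof -
  obtain C where C: "C \<ge> 0" "AE x in \<mu>. cmod (f x) \<le> C" using Linfty_bound[OF assms(1)] by auto
  obtain D where D: "D \<ge> 0" "AE x in \<mu>. cmod (g x) \<le> D" using Linfty_bound[OF assms(2)] by auto
  have "AE x in \<mu>. cmod (f x * g x) \<le> C * D"
    using C(2) D(2) by eventually_elim (simp add: norm_mult mult_mono C(1) D(1))
  then show ?thesis using assms unfolding Linfty_def by auto
qed

lemma Linfty_sum:
  assumes "finite A" "\<And>a. a \<in> A \<Longrightarrow> f a \<in> Linfty \<mu>" shows "(\<lambda>x. \<Sum>a\<in>A. f a x) \<in> Linfty \<mu>"
  using assms by (induction A rule: finite_induct) (auto intro!: Linfty_add Linfty_mult Linfty_const)

lemma Linfty_prod:
  assumes "finite A" "\<And>a. a \<in> A \<Longrightarrow> f a \<in> Linfty \<mu>" shows "(\<lambda>x. \<Prod>a\<in>A. f a x) \<in> Linfty \<mu>"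
  using assms by (induction A rule: finite_induct) (auto intro!: Linfty_add Linfty_mult Linfty_const)

lemma Linfty_inv:
  assumes "f \<in> borel_measurable \<mu>" "c > 0" "AE x in \<mu>. c \<le> cmod (f x)"
  shows "(\<lambda>x. 1 / f x) \<in> Linfty \<mu>"
proof -
  have "AE x in \<mu>. cmod (1 / f x) \<le> 1 / c"
    using assms(3) by eventually_elim (use assms(2) in \<open>auto simp: norm_divide divide_simps\<close>)
  moreover have "(\<lambda>x. 1 / f x) \<in> borel_measurable \<mu>" using assms(1) by measurable
  ultimately show ?thesis unfolding Linfty_def by auto
qed

definition goodm :: "'a measure \<Rightarrow> nat \<Rightarrow> ('a \<Rightarrow> complex mat) \<Rightarrow> bool" where
  "goodm \<mu> m M \<longleftrightarrow> (\<forall>x. M x \<in> carrier_mat m m) \<and> (\<forall>i<m. \<forall>j<m. (\<lambda>x. M x $$ (i,j)) \<in> Linfty \<mu>)"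

lemma goodm_mat:
  assumes "\<And>i j. i < m \<Longrightarrow> j < m \<Longrightarrow> (\<lambda>x. E i j x) \<in> Linfty \<mu>"
  shows "goodm \<mu> m (\<lambda>x. mat m m (\<lambda>(i,j). E i j x))"
  using assms unfolding goodm_def by auto

lemma goodm_one: "goodm \<mu> m (\<lambda>x. 1\<^sub>m m)"
  unfolding goodm_def by (auto intro: Linfty_const)

lemma goodm_mult:
  assumes M: "goodm \<mu> m M" and N: "goodm \<mu> m N"
  shows "goodm \<mu> m (\<lambda>x. M x * N x)"
  unfolding goodm_def
proof (intro conjI allI impI)
  fix x show "M x * N x \<in> carrier_mat m m" using M N unfolding goodm_def by (meson mult_carrier_mat)
next
  fix i j assume ij: "i < m" "j < m"
  have e: "(M x * N x) $$ (i,j) = (\<Sum>k\<in>{0..<m}. M x $$ (i,k) * N x $$ (k,j))" for x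
  proof -
    have c: "M x \<in> carrier_mat m m" "N x \<in> carrier_mat m m" using M N unfolding goodm_def by auto
    then show ?thesis using ij
      by (simp add: index_mult_mat(1) scalar_prod_def carrier_matD)
  qed
  show "(\<lambda>x. (M x * N x) $$ (i,j)) \<in> Linfty \<mu>"
    unfolding e using M N ij unfolding goodm_def by (intro Linfty_sum Linfty_mult) auto
qed

lemma goodm_pow:
  assumes M: "goodm \<mu> m M" shows "goodm \<mu> m (\<lambda>x. M x ^\<^sub>m k)"
proof (induction k)
  case 0
  have "(\<lambda>x. M x ^\<^sub>m 0) = (\<lambda>x. 1\<^sub>m m)" using M unfolding goodm_def by (metis carrier_matD(1) pow_mat.simps(1))
  then show ?case using goodm_one by simp
next
  case (Suc k)
  then show ?case using goodm_mult[OF Suc M] by simp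
qed

lemma goodm_smult:
  assumes M: "goodm \<mu> m M" and f: "f \<in> Linfty \<mu>"
  shows "goodm \<mu> m (\<lambda>x. f x \<cdot>\<^sub>m M x)"
  unfolding goodm_def
proof (intro conjI allI impI)
  fix x show "f x \<cdot>\<^sub>m M x \<in> carrier_mat m m" using M unfolding goodm_def by (meson smult_carrier_mat)
next
  fix i j assume ij: "i < m" "j < m"
  have e: "(f x \<cdot>\<^sub>m M x) $$ (i,j) = f x * M x $$ (i,j)" for x
    using M ij unfolding goodm_def by (metis carrier_matD index_smult_mat(1))
  show "(\<lambda>x. (f x \<cdot>\<^sub>m M x) $$ (i,j)) \<in> Linfty \<mu>"
    unfolding e using M f ij unfolding goodm_def by (intro Linfty_mult) auto
qed

lemma goodm_entry: "goodm \<mu> m M \<Longrightarrow> i < m \<Longrightarrow> j < m \<Longrightarrow> (\<lambda>x. M x $$ (i,j)) \<in> Linfty \<mu>"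
  unfolding goodm_def by blast

lemma goodm_carrier: "goodm \<mu> m M \<Longrightarrow> M x \<in> carrier_mat m m"
  unfolding goodm_def by blast

lemma goodm_det:
  assumes M: "goodm \<mu> m M" shows "(\<lambda>x. det (M x)) \<in> Linfty \<mu>"
proof -
  have e: "det (M x) = (\<Sum>p\<in>{p. p permutes {0..<m}}. signof p * (\<Prod>i = 0..<m. M x $$ (i, p i)))" for x
    using goodm_carrier[OF M] by (rule det_def')
  show ?thesis unfolding e
  proof (intro Linfty_sum Linfty_mult Linfty_prod Linfty_const)
    show "finite {p. p permutes {0..<m}}" by (simp add: finite_permutations)
  next
    fix p i assume p: "p \<in> {p. p permutes {0..<m}}" and i: "i \<in> {0..<m}"
    then have "p i < m" using permutes_in_image by fastforce
    then show "(\<lambda>x. M x $$ (i, p i)) \<in> Linfty \<mu>" using goodm_entry[OF M] i by simp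
  next
    show "finite {0..<m}" by simp
  qed
qed

lemma goodm_delete:
  assumes M: "goodm \<mu> m M" and "i < m" "j < m"
  shows "goodm \<mu> (m - 1) (\<lambda>x. mat_delete (M x) i j)"
  unfolding goodm_def
proof (intro conjI allI impI)
  fix x show "mat_delete (M x) i j \<in> carrier_mat (m - 1) (m - 1)"
    using goodm_carrier[OF M] by (rule mat_delete_carrier)
next
  fix a b assume ab: "a < m - 1" "b < m - 1"
  have e: "mat_delete (M x) i j $$ (a,b) = M x $$ (if a < i then a else Suc a, if b < j then b else Suc b)" for x
  proof -
    have "dim_row (M x) = m" "dim_col (M x) = m" using goodm_carrier[OF M, of x] by auto
    then show ?thesis using ab unfolding mat_delete_def by simp
  qed
  have "(if a < i then a else Suc a) < m" "(if b < j then b else Suc b) < m" using ab by auto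
  then show "(\<lambda>x. mat_delete (M x) i j $$ (a,b)) \<in> Linfty \<mu>"
    unfolding e by (rule goodm_entry[OF M])
qed

lemma goodm_adj:
  assumes M: "goodm \<mu> m M" shows "goodm \<mu> m (\<lambda>x. adj_mat (M x))"
  unfolding goodm_def
proof (intro conjI allI impI)
  fix x show "adj_mat (M x) \<in> carrier_mat m m" using goodm_carrier[OF M] adj_mat(1) by blast
next
  fix i j assume ij: "i < m" "j < m"
  have e: "adj_mat (M x) $$ (i,j) = (-1)^(j+i) * det (mat_delete (M x) j i)" for x
  proof -
    have "dim_row (M x) = m" "dim_col (M x) = m" using goodm_carrier[OF M, of x] by auto
    then show ?thesis using ij unfolding adj_mat_def cofactor_def by simp
  qed
  show "(\<lambda>x. adj_mat (M x) $$ (i,j)) \<in> Linfty \<mu>"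
    unfolding e by (intro Linfty_mult Linfty_const goodm_det[OF goodm_delete[OF M ij(2) ij(1)]])
qed

lemma sum_sq_le:
  fixes a :: "'b \<Rightarrow> real"
  assumes "finite A"
  shows "(\<Sum>j\<in>A. a j)\<^sup>2 \<le> real (card A) * (\<Sum>j\<in>A. (a j)\<^sup>2)"
proof -
  have "(\<Sum>j\<in>A. a j)\<^sup>2 = (\<Sum>j\<in>A. \<Sum>k\<in>A. a j * a k)"
    by (simp add: power2_eq_square sum_product)
  also have "\<dots> \<le> (\<Sum>j\<in>A. \<Sum>k\<in>A. ((a j)\<^sup>2 + (a k)\<^sup>2) / 2)"
  proof (intro sum_mono)
    fix j k
    have "0 \<le> (a j - a k)\<^sup>2" by simp
    then show "a j * a k \<le> ((a j)\<^sup>2 + (a k)\<^sup>2) / 2" by (simp add: power2_eq_square algebra_simps)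
  qed
  also have "\<dots> = real (card A) * (\<Sum>j\<in>A. (a j)\<^sup>2)"
    by (simp add: sum.distrib sum_divide_distrib[symmetric] add_divide_distrib sum_distrib_left[symmetric]
        sum.swap[of "\<lambda>j k. (a k)\<^sup>2"] algebra_simps)
  finally show ?thesis .
qed

lemma mult_opmat_bounded:
  assumes fm: "finite_measure \<mu>" and E: "\<And>i j. i < n \<Longrightarrow> j < n \<Longrightarrow> E i j \<in> Linfty \<mu>"
  shows "bounded_op \<mu> n (mult_opmat n E)"
proof -
  interpret finite_measure \<mu> by (rule fm)
  have "\<forall>i j. \<exists>c. i < n \<and> j < n \<longrightarrow> c \<ge> 0 \<and> (AE x in \<mu>. cmod (E i j x) \<le> c)"
    using Linfty_bound[OF E] by blast
  then obtain CC where CC: "\<And>i j. i < n \<Longrightarrow> j < n \<Longrightarrow> CC i j \<ge> 0 \<and> (AE x in \<mu>. cmod (E i j x) \<le> CC i j)"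
    by metis
  define C where "C = (\<Sum>i<n. \<Sum>j<n. CC i j)"
  have CCle: "CC i j \<le> C" if "i < n" "j < n" for i j
  proof -
    have "CC i j \<le> (\<Sum>j<n. CC i j)" using that CC by (intro member_le_sum) auto
    also have "\<dots> \<le> C" unfolding C_def using that CC by (intro member_le_sum sum_nonneg) auto
    finally show ?thesis .
  qed
  have C0: "C \<ge> 0" unfolding C_def using CC by (intro sum_nonneg) auto
  have AEC: "AE x in \<mu>. \<forall>i\<in>{..<n}. \<forall>j\<in>{..<n}. cmod (E i j x) \<le> C"
  proof (intro AE_finite_allI)
    fix i j assume "i \<in> {..<n}" "j \<in> {..<n}"
    then show "AE x in \<mu>. cmod (E i j x) \<le> C"
      using CC[of i j] CCle[of i j] by (auto elim!: eventually_mono)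
  qed auto
  have ptw: "AE x in \<mu>. \<forall>i<n. (cmod (mult_opmat n E f x i))\<^sup>2 \<le> real n * C\<^sup>2 * (\<Sum>j<n. (cmod (f x j))\<^sup>2)" for f
    using AEC
  proof eventually_elim
    case (elim x)
    show ?case
    proof (intro allI impI)
      fix i assume i: "i < n"
      have "cmod (mult_opmat n E f x i) \<le> (\<Sum>j<n. cmod (E i j x * f x j))"
        unfolding mult_opmat_def by (rule norm_sum)
      also have "\<dots> \<le> (\<Sum>j<n. C * cmod (f x j))"
        using elim i by (intro sum_mono) (auto simp: norm_mult intro!: mult_right_mono)
      finally have 1: "cmod (mult_opmat n E f x i) \<le> C * (\<Sum>j<n. cmod (f x j))"
        by (simp add: sum_distrib_left)
      have "(cmod (mult_opmat n E f x i))\<^sup>2 \<le> (C * (\<Sum>j<n. cmod (f x j)))\<^sup>2"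
        by (rule power_mono[OF 1]) simp
      also have "\<dots> = C\<^sup>2 * (\<Sum>j<n. cmod (f x j))\<^sup>2" by (simp add: power_mult_distrib)
      also have "\<dots> \<le> C\<^sup>2 * (real n * (\<Sum>j<n. (cmod (f x j))\<^sup>2))"
        using sum_sq_le[of "{..<n}" "\<lambda>j. cmod (f x j)"] by (intro mult_left_mono) auto
      finally show "(cmod (mult_opmat n E f x i))\<^sup>2 \<le> real n * C\<^sup>2 * (\<Sum>j<n. (cmod (f x j))\<^sup>2)"
        by (simp add: algebra_simps)
    qed
  qed
  have meas: "(\<lambda>x. mult_opmat n E f x i) \<in> borel_measurable \<mu>" if f: "f \<in> L2vec \<mu> n" and i: "i < n" for f i
    unfolding mult_opmat_def
  proof (intro borel_measurable_sum borel_measurable_times)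
    fix j assume "j \<in> {..<n}"
    then show "E i j \<in> borel_measurable \<mu>" "(\<lambda>x. f x j) \<in> borel_measurable \<mu>"
      using E[OF i, of j] f unfolding L2vec_def by (auto intro: Linfty_meas)
  qed
  have intg: "integrable \<mu> (\<lambda>x. (cmod (mult_opmat n E f x i))\<^sup>2)" if f: "f \<in> L2vec \<mu> n" and i: "i < n" for f i
  proof (rule Bochner_Integration.integrable_bound)
    show "integrable \<mu> (\<lambda>x. real n * C\<^sup>2 * (\<Sum>j<n. (cmod (f x j))\<^sup>2))"
      using f unfolding L2vec_def by (intro integrable_mult_right integrable_sum) auto
    show "(\<lambda>x. (cmod (mult_opmat n E f x i))\<^sup>2) \<in> borel_measurable \<mu>"
      using meas[OF f i] by measurable
    show "AE x in \<mu>. norm ((cmod (mult_opmat n E f x i))\<^sup>2) \<le> norm (real n * C\<^sup>2 * (\<Sum>j<n. (cmod (f x j))\<^sup>2))"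
      using ptw[of f] proof eventually_elim
      case (elim x)
      then have "(cmod (mult_opmat n E f x i))\<^sup>2 \<le> real n * C\<^sup>2 * (\<Sum>j<n. (cmod (f x j))\<^sup>2)" using i by blast
      then show ?case by simp
    qed
  qed
  have L2: "mult_opmat n E f \<in> L2vec \<mu> n" if f: "f \<in> L2vec \<mu> n" for f
    unfolding L2vec_def using meas[OF f] intg[OF f] by blast
  have eqv: "L2eqv \<mu> n (mult_opmat n E f) (mult_opmat n E g)" if "L2eqv \<mu> n f g" for f g
  proof -
    have "AE x in \<mu>. \<forall>j\<in>{..<n}. f x j = g x j"
      using that unfolding L2eqv_def by (intro AE_finite_allI) auto
    then have "AE x in \<mu>. mult_opmat n E f x i = mult_opmat n E g x i" for i
      by eventually_elim (simp add: mult_opmat_def)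
    then show ?thesis unfolding L2eqv_def by blast
  qed
  have lin: "L2eqv \<mu> n (mult_opmat n E (\<lambda>x i. a * f x i + b * g x i))
      (\<lambda>x i. a * mult_opmat n E f x i + b * mult_opmat n E g x i)" for f g and a b :: complex
    unfolding L2eqv_def mult_opmat_def
    by (simp add: sum.distrib sum_distrib_left algebra_simps)
  have nrm: "L2norm \<mu> n (mult_opmat n E f) \<le> (real n * C) * L2norm \<mu> n f" if f: "f \<in> L2vec \<mu> n" for f
  proof -
    have "(\<Sum>i<n. \<integral>x. (cmod (mult_opmat n E f x i))\<^sup>2 \<partial>\<mu>)
        \<le> (\<Sum>i<n. \<integral>x. real n * C\<^sup>2 * (\<Sum>j<n. (cmod (f x j))\<^sup>2) \<partial>\<mu>)"
    proof (intro sum_mono integral_mono_AE)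
      fix i assume i: "i \<in> {..<n}"
      show "integrable \<mu> (\<lambda>x. (cmod (mult_opmat n E f x i))\<^sup>2)" using intg[OF f] i by auto
      show "integrable \<mu> (\<lambda>x. real n * C\<^sup>2 * (\<Sum>j<n. (cmod (f x j))\<^sup>2))"
        using f unfolding L2vec_def by (intro integrable_mult_right integrable_sum) auto
      show "AE x in \<mu>. (cmod (mult_opmat n E f x i))\<^sup>2 \<le> real n * C\<^sup>2 * (\<Sum>j<n. (cmod (f x j))\<^sup>2)"
        using ptw[of f] i by (auto elim!: eventually_mono)
    qed
    also have "\<dots> = (real n * C)\<^sup>2 * (\<Sum>j<n. \<integral>x. (cmod (f x j))\<^sup>2 \<partial>\<mu>)"
    proof -
      have "(\<integral>x. (\<Sum>j<n. (cmod (f x j))\<^sup>2) \<partial>\<mu>) = (\<Sum>j<n. \<integral>x. (cmod (f x j))\<^sup>2 \<partial>\<mu>)"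
        using f unfolding L2vec_def by (intro Bochner_Integration.integral_sum) auto
      then show ?thesis by (simp add: power_mult_distrib power2_eq_square)
    qed
    finally have "sqrt (\<Sum>i<n. \<integral>x. (cmod (mult_opmat n E f x i))\<^sup>2 \<partial>\<mu>)
       \<le> sqrt ((real n * C)\<^sup>2 * (\<Sum>j<n. \<integral>x. (cmod (f x j))\<^sup>2 \<partial>\<mu>))"
      by (rule real_sqrt_le_mono)
    also have "\<dots> = (real n * C) * sqrt (\<Sum>j<n. \<integral>x. (cmod (f x j))\<^sup>2 \<partial>\<mu>)"
      using C0 by (simp add: real_sqrt_mult)
    finally show ?thesis unfolding L2norm_def .
  qed
  show ?thesis unfolding bounded_op_def
    using L2 eqv lin nrm by blast
qed

lemma mult_op_eval: "mult_op \<psi> f x i = \<psi> x * f x 0"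
  by (simp add: mult_op_def mult_opmat_def)

lemma L2norm_cong:
  assumes "f \<in> L2vec \<mu> n" "g \<in> L2vec \<mu> n" "L2eqv \<mu> n f g"
  shows "L2norm \<mu> n f = L2norm \<mu> n g"
proof -
  have "(\<integral>x. (cmod (f x i))\<^sup>2 \<partial>\<mu>) = (\<integral>x. (cmod (g x i))\<^sup>2 \<partial>\<mu>)" if i: "i < n" for i
  proof (rule integral_cong_AE)
    show "(\<lambda>x. (cmod (f x i))\<^sup>2) \<in> borel_measurable \<mu>" "(\<lambda>x. (cmod (g x i))\<^sup>2) \<in> borel_measurable \<mu>"
      using assms(1,2) i unfolding L2vec_def by auto
    show "AE x in \<mu>. (cmod (f x i))\<^sup>2 = (cmod (g x i))\<^sup>2"
      using assms(3) i unfolding L2eqv_def by (auto elim!: eventually_mono)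
  qed
  then show ?thesis unfolding L2norm_def by (auto intro!: arg_cong[where f=sqrt] sum.cong)
qed

lemma inv_lb:
  assumes fm: "finite_measure \<mu>" and inv: "invertible_op \<mu> 1 (mult_op \<psi>)"
  shows "\<psi> \<in> borel_measurable \<mu> \<and> (\<exists>c>0. AE x in \<mu>. c \<le> cmod (\<psi> x))"
proof -
  interpret finite_measure \<mu> by (rule fm)
  obtain S where Sb: "bounded_op \<mu> 1 S" and ST: "op_eq \<mu> 1 (S \<circ> mult_op \<psi>) id"
    using inv unfolding invertible_op_def by blast
  have Tb: "bounded_op \<mu> 1 (mult_op \<psi>)" using inv unfolding invertible_op_def by blast
  have one: "(\<lambda>x i. 1::complex) \<in> L2vec \<mu> 1" unfolding L2vec_def by auto
  then have "mult_op \<psi> (\<lambda>x i. 1) \<in> L2vec \<mu> 1" using Tb unfolding bounded_op_def by blast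
  then have "(\<lambda>x. mult_op \<psi> (\<lambda>x i. 1) x 0) \<in> borel_measurable \<mu>" unfolding L2vec_def by blast
  then have psim: "\<psi> \<in> borel_measurable \<mu>" by (simp add: mult_op_eval)
  obtain C where C: "\<And>f. f \<in> L2vec \<mu> 1 \<Longrightarrow> L2norm \<mu> 1 (S f) \<le> C * L2norm \<mu> 1 f"
    using Sb unfolding bounded_op_def by blast
  define c where "c = 1 / (2 * (\<bar>C\<bar> + 1))"
  have c0: "c > 0" unfolding c_def by (simp add: add_pos_nonneg)
  have cC: "\<bar>C\<bar> * c \<le> 1/2" unfolding c_def by (simp add: field_simps)
  have "AE x in \<mu>. c \<le> cmod (\<psi> x)"
  proof (rule ccontr)
    assume nAE: "\<not> (AE x in \<mu>. c \<le> cmod (\<psi> x))"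
    define A where "A = {x \<in> space \<mu>. cmod (\<psi> x) < c}"
    have A: "A \<in> sets \<mu>" unfolding A_def using psim by measurable
    have mA: "measure \<mu> A > 0"
    proof (rule ccontr)
      assume "\<not> measure \<mu> A > 0"
      then have "measure \<mu> A = 0" using measure_nonneg[of \<mu> A] by linarith
      then have "A \<in> null_sets \<mu>" using A emeasure_eq_measure[of A] by (simp add: null_sets_def)
      then have "AE x in \<mu>. c \<le> cmod (\<psi> x)" by (rule AE_I') (auto simp: A_def not_le)
      then show False using nAE by blast
    qed
    define f where "f = (\<lambda>x (i::nat). indicator A x :: complex)"
    have sq: "(\<lambda>x. (cmod (f x i))\<^sup>2) = (indicator A :: _ \<Rightarrow> real)" for i
      unfolding f_def by (auto simp: indicator_def)
    have fL: "f \<in> L2vec \<mu> 1" unfolding L2vec_def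
    proof (intro CollectI allI impI conjI)
      fix i :: nat show "(\<lambda>x. f x i) \<in> borel_measurable \<mu>" unfolding f_def using A by measurable
      show "integrable \<mu> (\<lambda>x. (cmod (f x i))\<^sup>2)" unfolding sq using A
        by (intro integrable_real_indicator A) (simp add: less_top[symmetric])
    qed
    have nf: "L2norm \<mu> 1 f = sqrt (measure \<mu> A)"
      unfolding L2norm_def sq using A by (simp add: Int_absorb2 sets.sets_into_space)
    have TfL: "mult_op \<psi> f \<in> L2vec \<mu> 1" using Tb fL unfolding bounded_op_def by blast
    have "(\<integral>x. (cmod (mult_op \<psi> f x 0))\<^sup>2 \<partial>\<mu>) \<le> (\<integral>x. c\<^sup>2 * indicator A x \<partial>\<mu>)"
    proof (rule integral_mono)
      show "integrable \<mu> (\<lambda>x. (cmod (mult_op \<psi> f x 0))\<^sup>2)" using TfL unfolding L2vec_def by auto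
      show "integrable \<mu> (\<lambda>x. c\<^sup>2 * indicator A x)" using A
        by (intro integrable_mult_right integrable_real_indicator A) (simp add: less_top[symmetric])
      fix x assume "x \<in> space \<mu>"
      show "(cmod (mult_op \<psi> f x 0))\<^sup>2 \<le> c\<^sup>2 * indicator A x"
      proof (cases "x \<in> A")
        case True
        then have "cmod (\<psi> x) \<le> c" unfolding A_def by auto
        then have "(cmod (\<psi> x))\<^sup>2 \<le> c\<^sup>2" by (intro power_mono) auto
        then show ?thesis using True by (simp add: mult_op_eval f_def norm_mult)
      qed (simp add: mult_op_eval f_def)
    qed
    also have "\<dots> = c\<^sup>2 * measure \<mu> A" using A by (simp add: Int_absorb2 sets.sets_into_space)
    finally have nT: "L2norm \<mu> 1 (mult_op \<psi> f) \<le> c * sqrt (measure \<mu> A)"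
      unfolding L2norm_def using c0
      by (simp add: real_sqrt_mult) (metis real_sqrt_abs real_sqrt_le_mono abs_of_pos real_sqrt_mult)
    have STfL: "S (mult_op \<psi> f) \<in> L2vec \<mu> 1" using Sb TfL unfolding bounded_op_def by blast
    have "L2eqv \<mu> 1 (S (mult_op \<psi> f)) f" using ST fL unfolding op_eq_def by auto
    then have "L2norm \<mu> 1 f = L2norm \<mu> 1 (S (mult_op \<psi> f))" using L2norm_cong[OF STfL fL] by simp
    also have "\<dots> \<le> C * L2norm \<mu> 1 (mult_op \<psi> f)" using C[OF TfL] .
    also have "\<dots> \<le> \<bar>C\<bar> * (c * sqrt (measure \<mu> A))"
    proof -
      have "0 \<le> L2norm \<mu> 1 (mult_op \<psi> f)" unfolding L2norm_def
        by (intro real_sqrt_ge_zero sum_nonneg integral_nonneg_AE) auto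
      then have "C * L2norm \<mu> 1 (mult_op \<psi> f) \<le> \<bar>C\<bar> * L2norm \<mu> 1 (mult_op \<psi> f)"
        by (intro mult_right_mono) auto
      also have "\<dots> \<le> \<bar>C\<bar> * (c * sqrt (measure \<mu> A))" using nT by (intro mult_left_mono) auto
      finally show ?thesis .
    qed
    also have "\<dots> \<le> 1/2 * sqrt (measure \<mu> A)"
      using cC by (subst mult.assoc[symmetric], intro mult_right_mono) auto
    finally have "sqrt (measure \<mu> A) \<le> 1/2 * sqrt (measure \<mu> A)" unfolding nf .
    then show False using mA by simp
  qed
  then show ?thesis using psim c0 by blast
qed

lemma mat_mult_entry:
  assumes "A \<in> carrier_mat n n" "B \<in> carrier_mat n n" "i < n" "j < n"
  shows "(A * B) $$ (i,j) = (\<Sum>k<n. A $$ (i,k) * B $$ (k,j))"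
  using assms by (simp add: index_mult_mat(1) scalar_prod_def carrier_matD atLeast0LessThan)

lemma pow_zero:
  assumes N: "N \<in> carrier_mat n n" and su: "\<And>i j. i < n \<Longrightarrow> j < n \<Longrightarrow> j \<le> i \<Longrightarrow> N $$ (i,j) = 0"
  shows "i < n \<Longrightarrow> j < n \<Longrightarrow> j < i + m \<Longrightarrow> (N ^\<^sub>m m) $$ (i,j) = 0"
proof (induction m arbitrary: j)
  case 0
  then show ?case using N by (simp add: carrier_matD)
next
  case (Suc m)
  have "(N ^\<^sub>m Suc m) $$ (i,j) = (N ^\<^sub>m m * N) $$ (i,j)" by simp
  also have "\<dots> = (\<Sum>k<n. (N ^\<^sub>m m) $$ (i,k) * N $$ (k,j))"
    using Suc.prems N by (intro mat_mult_entry) auto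
  also have "\<dots> = 0"
  proof (intro sum.neutral ballI)
    fix k assume k: "k \<in> {..<n}"
    show "(N ^\<^sub>m m) $$ (i,k) * N $$ (k,j) = 0"
    proof (cases "k < i + m")
      case True then show ?thesis using Suc k by simp
    next
      case False then show ?thesis using Suc.prems k su by simp
    qed
  qed
  finally show ?case .
qed

lemma pow_diag:
  assumes N: "N \<in> carrier_mat n n" and su: "\<And>i j. i < n \<Longrightarrow> j < n \<Longrightarrow> j \<le> i \<Longrightarrow> N $$ (i,j) = 0"
  shows "i + m < n \<Longrightarrow> (N ^\<^sub>m m) $$ (i,i+m) = (\<Prod>l<m. N $$ (i+l, i+l+1))"
proof (induction m)
  case 0
  then show ?case using N by (simp add: carrier_matD)
next
  case (Suc m)
  have "(N ^\<^sub>m Suc m) $$ (i,i + Suc m) = (N ^\<^sub>m m * N) $$ (i,i + Suc m)" by simp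
  also have "\<dots> = (\<Sum>k<n. (N ^\<^sub>m m) $$ (i,k) * N $$ (k,i + Suc m))"
    using Suc.prems N by (intro mat_mult_entry) auto
  also have "\<dots> = (N ^\<^sub>m m) $$ (i,i+m) * N $$ (i+m,i + Suc m)
      + (\<Sum>k\<in>{..<n} - {i+m}. (N ^\<^sub>m m) $$ (i,k) * N $$ (k,i + Suc m))"
    using Suc.prems by (subst sum.remove[of _ "i+m"]) auto
  also have "(\<Sum>k\<in>{..<n} - {i+m}. (N ^\<^sub>m m) $$ (i,k) * N $$ (k,i + Suc m)) = 0"
  proof (intro sum.neutral ballI)
    fix k assume k: "k \<in> {..<n} - {i+m}"
    show "(N ^\<^sub>m m) $$ (i,k) * N $$ (k,i + Suc m) = 0"
    proof (cases "k < i + m")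
      case True then show ?thesis using pow_zero[OF N su, of i k m] Suc.prems k by simp
    next
      case False then show ?thesis using Suc.prems k su by simp
    qed
  qed
  finally show ?case using Suc by simp
qed

lemma pow_comm:
  assumes N: "N \<in> carrier_mat n n"
  shows "N ^\<^sub>m m * N = N * N ^\<^sub>m m"
proof (induction m)
  case 0 then show ?case using N by (simp add: carrier_matD)
next
  case (Suc m)
  have "N ^\<^sub>m Suc m * N = (N ^\<^sub>m m * N) * N" by simp
  also have "\<dots> = (N * N ^\<^sub>m m) * N" using Suc by simp
  also have "\<dots> = N * (N ^\<^sub>m m * N)" using N by (simp add: assoc_mult_mat[of _ n n _ n _ n])
  finally show ?case by simp
qed

definition Jmat :: "nat \<Rightarrow> complex mat" where
  "Jmat n = mat n n (\<lambda>(i,j). if j = i + 1 then 1 else 0)"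

definition chainmat :: "nat \<Rightarrow> complex mat \<Rightarrow> complex mat" where
  "chainmat n N = mat n n (\<lambda>(i,k). (N ^\<^sub>m (n - 1 - k)) $$ (i, n - 1))"

lemma chain_carrier: "chainmat n N \<in> carrier_mat n n"
  unfolding chainmat_def by (rule mat_carrier)

lemma Jmat_carrier: "Jmat n \<in> carrier_mat n n"
  unfolding Jmat_def by (rule mat_carrier)

lemma chain_NS:
  assumes N: "N \<in> carrier_mat n n" and su: "\<And>i j. i < n \<Longrightarrow> j < n \<Longrightarrow> j \<le> i \<Longrightarrow> N $$ (i,j) = 0"
  shows "N * chainmat n N = chainmat n N * Jmat n"
proof (rule eq_matI)
  fix i k assume i: "i < dim_row (chainmat n N * Jmat n)" and k: "k < dim_col (chainmat n N * Jmat n)"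
  then have i: "i < n" and k: "k < n" by (auto simp: chainmat_def Jmat_def)
  have C: "chainmat n N \<in> carrier_mat n n" "Jmat n \<in> carrier_mat n n" by (auto simp: chainmat_def Jmat_def)
  have "(N * chainmat n N) $$ (i,k) = (\<Sum>l<n. N $$ (i,l) * chainmat n N $$ (l, k))"
    using N C i k by (intro mat_mult_entry) auto
  also have "\<dots> = (\<Sum>l<n. N $$ (i,l) * (N ^\<^sub>m (n - 1 - k)) $$ (l, n - 1))"
    using k by (intro sum.cong refl) (simp add: chainmat_def)
  also have "\<dots> = (N * N ^\<^sub>m (n - 1 - k)) $$ (i, n - 1)"
    using N i k by (intro mat_mult_entry[symmetric]) auto
  also have "\<dots> = (N ^\<^sub>m Suc (n - 1 - k)) $$ (i, n - 1)"
    using pow_comm[OF N] by simp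
  finally have L: "(N * chainmat n N) $$ (i,k) = (N ^\<^sub>m Suc (n - 1 - k)) $$ (i, n - 1)" .
  have R: "(chainmat n N * Jmat n) $$ (i,k) = (\<Sum>l<n. chainmat n N $$ (i,l) * (if k = l + 1 then 1 else 0))"
  proof -
    have "(chainmat n N * Jmat n) $$ (i,k) = (\<Sum>l<n. chainmat n N $$ (i,l) * Jmat n $$ (l,k))"
      using C i k by (intro mat_mult_entry) auto
    also have "\<dots> = (\<Sum>l<n. chainmat n N $$ (i,l) * (if k = l + 1 then 1 else 0))"
      using k by (intro sum.cong refl) (simp add: Jmat_def)
    finally show ?thesis .
  qed
  show "(N * chainmat n N) $$ (i,k) = (chainmat n N * Jmat n) $$ (i,k)"
  proof (cases k)
    case 0
    have "(N ^\<^sub>m Suc (n - 1 - k)) $$ (i, n - 1) = 0"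
      using pow_zero[OF N su, of i "n - 1" "Suc (n - 1 - k)"] i k 0 by simp
    then show ?thesis unfolding L R using 0 by simp
  next
    case (Suc k')
    have "(\<Sum>l<n. chainmat n N $$ (i,l) * (if k = l + 1 then 1 else 0)) = chainmat n N $$ (i,k')"
      using Suc k by (simp add: if_distrib[of "\<lambda>x. _ * x"] sum.delta' cong: if_cong)
    also have "\<dots> = (N ^\<^sub>m Suc (n - 1 - k)) $$ (i, n - 1)"
      using Suc i k by (simp add: chainmat_def Suc_diff_Suc)
    finally show ?thesis unfolding L R by simp
  qed
qed (use N in \<open>auto simp: chainmat_def Jmat_def\<close>)

lemma chain_upper:
  assumes N: "N \<in> carrier_mat n n" and su: "\<And>i j. i < n \<Longrightarrow> j < n \<Longrightarrow> j \<le> i \<Longrightarrow> N $$ (i,j) = 0"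
  shows "upper_triangular (chainmat n N)"
  unfolding upper_triangular_def
proof (intro allI impI)
  fix i k assume "i < dim_row (chainmat n N)" "k < i"
  then show "chainmat n N $$ (i,k) = 0"
    using pow_zero[OF N su, of i "n - 1" "n - 1 - k"] by (simp add: chainmat_def)
qed

lemma chain_det:
  assumes N: "N \<in> carrier_mat n n" and su: "\<And>i j. i < n \<Longrightarrow> j < n \<Longrightarrow> j \<le> i \<Longrightarrow> N $$ (i,j) = 0"
  shows "det (chainmat n N) = (\<Prod>k<n. \<Prod>l<n - 1 - k. N $$ (k+l, k+l+1))"
proof -
  have "det (chainmat n N) = prod_list (diag_mat (chainmat n N))"
    by (rule det_upper_triangular[OF chain_upper[OF N su] chain_carrier])
  also have "\<dots> = (\<Prod>k<n. chainmat n N $$ (k,k))"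
    by (simp add: prod_list_diag_prod chainmat_def atLeast0LessThan)
  also have "\<dots> = (\<Prod>k<n. \<Prod>l<n - 1 - k. N $$ (k+l, k+l+1))"
  proof (intro prod.cong refl)
    fix k assume k: "k \<in> {..<n}"
    then have "chainmat n N $$ (k,k) = (N ^\<^sub>m (n - 1 - k)) $$ (k, k + (n - 1 - k))"
      by (simp add: chainmat_def)
    also have "\<dots> = (\<Prod>l<n - 1 - k. N $$ (k+l, k+l+1))"
      using k by (intro pow_diag[OF N su]) auto
    finally show "chainmat n N $$ (k,k) = (\<Prod>l<n - 1 - k. N $$ (k+l, k+l+1))" .
  qed
  finally show ?thesis .
qed

definition lbf :: "'a measure \<Rightarrow> ('a \<Rightarrow> complex) \<Rightarrow> bool" where
  "lbf \<mu> f \<longleftrightarrow> (\<exists>c>0. AE x in \<mu>. c \<le> cmod (f x))"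

lemma lbf_prod:
  assumes "finite A" "\<And>a. a \<in> A \<Longrightarrow> lbf \<mu> (f a)" shows "lbf \<mu> (\<lambda>x. \<Prod>a\<in>A. f a x)"
  using assms
proof (induction A rule: finite_induct)
  case empty then show ?case unfolding lbf_def by (intro exI[of _ 1]) auto
next
  case (insert a A)
  obtain c where c: "c > 0" "AE x in \<mu>. c \<le> cmod (f a x)" using insert.prems unfolding lbf_def by blast
  obtain d where d: "d > 0" "AE x in \<mu>. d \<le> cmod (\<Prod>a\<in>A. f a x)" using insert unfolding lbf_def by blast
  have "AE x in \<mu>. c * d \<le> cmod (\<Prod>a\<in>insert a A. f a x)"
    using c(2) d(2) proof eventually_elim
    case (elim x)
    then have "c * d \<le> cmod (f a x) * cmod (\<Prod>a\<in>A. f a x)" using c d by (intro mult_mono) auto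
    then show ?case using insert.hyps by (simp add: norm_mult)
  qed
  then show ?case unfolding lbf_def using c d by (intro exI[of _ "c * d"]) auto
qed

lemma opmat_vec:
  assumes M: "M \<in> carrier_mat n n" and i: "i < n" and E: "\<And>i j. i < n \<Longrightarrow> j < n \<Longrightarrow> E i j x = M $$ (i,j)"
  shows "mult_opmat n E g x i = (M *\<^sub>v vec n (\<lambda>j. g x j)) $ i"
proof -
  have "(M *\<^sub>v vec n (\<lambda>j. g x j)) $ i = (\<Sum>j<n. M $$ (i,j) * g x j)"
    using M i by (simp add: scalar_prod_def atLeast0LessThan carrier_matD)
  also have "\<dots> = mult_opmat n E g x i"
    unfolding mult_opmat_def using E i by (intro sum.cong refl) auto
  finally show ?thesis by simp
qed

lemma opmat_vecv:
  assumes M: "M \<in> carrier_mat n n" and E: "\<And>i j. i < n \<Longrightarrow> j < n \<Longrightarrow> E i j x = M $$ (i,j)"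
  shows "vec n (\<lambda>i. mult_opmat n E g x i) = M *\<^sub>v vec n (\<lambda>j. g x j)"
proof (intro eq_vecI)
  fix i assume "i < dim_vec (M *\<^sub>v vec n (\<lambda>j. g x j))"
  then have i: "i < n" using M by (simp add: carrier_matD)
  show "vec n (\<lambda>i. mult_opmat n E g x i) $ i = (M *\<^sub>v vec n (\<lambda>j. g x j)) $ i"
    using opmat_vec[OF M i, of E x g] E i by simp
qed (use M in \<open>simp add: carrier_matD\<close>)

theorem lemma2p4:
  fixes \<mu> :: "'a::metric_space measure" and K :: "'a set" and n :: nat
    and \<phi> :: "'a \<Rightarrow> complex" and \<phi>ij :: "nat \<Rightarrow> nat \<Rightarrow> 'a \<Rightarrow> complex"
  assumes "n \<ge> 1"
    and "compact K" and "finite_measure \<mu>" and "regular_borel_on K \<mu>"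
    and "\<phi> \<in> Linfty \<mu>"
    and "\<And>i j. i < j \<Longrightarrow> j < n \<Longrightarrow> \<phi>ij i j \<in> Linfty \<mu>"
    and "AE t in \<mu>. strongly_irreducible n
           (\<lambda>i j. if i = j then \<phi> t else if i < j then \<phi>ij i j t else 0)"
    and "\<And>i. i + 1 < n \<Longrightarrow> invertible_op \<mu> 1 (mult_op (\<phi>ij i (i + 1)))"
  shows "\<exists>X Y. bounded_op \<mu> n X \<and> bounded_op \<mu> n Y \<and>
           op_eq \<mu> n (X \<circ> Y) id \<and> op_eq \<mu> n (Y \<circ> X) id \<and>
           op_eq \<mu> n (X \<circ> mult_opmat n (\<lambda>i j. if i = j then \<phi> else if i < j then \<phi>ij i j else (\<lambda>_. 0)) \<circ> Y)
                    (mult_opmat n (\<lambda>i j. if i = j then \<phi> else if j = i + 1 then (\<lambda>_. 1) else (\<lambda>_. 0)))"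
proof -
  have sd: "lbf \<mu> (\<phi>ij a (a+1))" if "a + 1 < n" for a
    using inv_lb[OF assms(3) assms(8)[OF that]] unfolding lbf_def by blast
  define Nm where "Nm = (\<lambda>x. mat n n (\<lambda>(i,j). if i < j then \<phi>ij i j x else 0))"
  define Am where "Am = (\<lambda>x. mat n n (\<lambda>(i,j). if i = j then \<phi> x else if i < j then \<phi>ij i j x else 0))"
  define Tm where "Tm = (\<lambda>x. mat n n (\<lambda>(i,j). if i = j then \<phi> x else if j = i + 1 then (1::complex) else 0))"
  define Sm where "Sm = (\<lambda>x. chainmat n (Nm x))"
  define Xm where "Xm = (\<lambda>x. (1 / det (Sm x)) \<cdot>\<^sub>m adj_mat (Sm x))"
  have Nc: "Nm x \<in> carrier_mat n n" for x unfolding Nm_def by (rule mat_carrier)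
  have Ac: "Am x \<in> carrier_mat n n" for x unfolding Am_def by (rule mat_carrier)
  have Tc: "Tm x \<in> carrier_mat n n" for x unfolding Tm_def by (rule mat_carrier)
  have Sc: "Sm x \<in> carrier_mat n n" for x unfolding Sm_def by (rule chain_carrier)
  have Xc: "Xm x \<in> carrier_mat n n" for x unfolding Xm_def using adj_mat(1)[OF Sc] by simp
  have Nsu: "\<And>i j. i < n \<Longrightarrow> j < n \<Longrightarrow> j \<le> i \<Longrightarrow> Nm x $$ (i,j) = 0" for x
    by (simp add: Nm_def)
  have AS: "Am x * Sm x = Sm x * Tm x" for x
  proof -
    have A: "Am x = \<phi> x \<cdot>\<^sub>m 1\<^sub>m n + Nm x" by (rule eq_matI) (auto simp: Am_def Nm_def)
    have T: "Tm x = \<phi> x \<cdot>\<^sub>m 1\<^sub>m n + Jmat n" by (rule eq_matI) (auto simp: Tm_def Jmat_def)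
    have 1: "\<phi> x \<cdot>\<^sub>m 1\<^sub>m n \<in> carrier_mat n n" by simp
    have "Am x * Sm x = (\<phi> x \<cdot>\<^sub>m 1\<^sub>m n) * Sm x + Nm x * Sm x"
      unfolding A by (rule add_mult_distrib_mat[OF 1 Nc Sc])
    also have "(\<phi> x \<cdot>\<^sub>m 1\<^sub>m n) * Sm x = \<phi> x \<cdot>\<^sub>m Sm x"
      using mult_smult_assoc_mat[OF one_carrier_mat Sc, of "\<phi> x" x] left_mult_one_mat[OF Sc[of x]] by simp
    also have "Nm x * Sm x = Sm x * Jmat n" unfolding Sm_def by (rule chain_NS[OF Nc Nsu])
    also have "\<phi> x \<cdot>\<^sub>m Sm x + Sm x * Jmat n = Sm x * (\<phi> x \<cdot>\<^sub>m 1\<^sub>m n) + Sm x * Jmat n"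
      using mult_smult_distrib[OF Sc one_carrier_mat, of x "\<phi> x"] right_mult_one_mat[OF Sc[of x]] by simp
    also have "\<dots> = Sm x * Tm x"
      unfolding T by (rule mult_add_distrib_mat[OF Sc 1 Jmat_carrier, symmetric])
    finally show ?thesis .
  qed
  have detS: "det (Sm x) = (\<Prod>k<n. \<Prod>l<n - 1 - k. \<phi>ij (k+l) (k+l+1) x)" for x
  proof -
    have "det (Sm x) = (\<Prod>k<n. \<Prod>l<n - 1 - k. Nm x $$ (k+l, k+l+1))"
      unfolding Sm_def by (rule chain_det[OF Nc]) (rule Nsu)
    also have "\<dots> = (\<Prod>k<n. \<Prod>l<n - 1 - k. \<phi>ij (k+l) (k+l+1) x)"
      by (intro prod.cong refl) (auto simp: Nm_def)
    finally show ?thesis .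
  qed
  have lbd: "lbf \<mu> (\<lambda>x. det (Sm x))"
    unfolding detS by (intro lbf_prod sd) auto
  have gN: "goodm \<mu> n Nm" unfolding Nm_def
  proof (rule goodm_mat)
    fix i j assume "i < n" "j < n"
    then show "(\<lambda>x. if i < j then \<phi>ij i j x else 0) \<in> Linfty \<mu>"
      using assms(6)[of i j] by (cases "i < j") (auto intro: Linfty_const)
  qed
  have gS: "goodm \<mu> n Sm" unfolding goodm_def
  proof (intro conjI allI impI)
    fix x show "Sm x \<in> carrier_mat n n" by (rule Sc)
  next
    fix i k assume ik: "i < n" "k < n"
    have e: "Sm x $$ (i,k) = (Nm x ^\<^sub>m (n - 1 - k)) $$ (i, n - 1)" for x
      using ik by (simp add: Sm_def chainmat_def)
    show "(\<lambda>x. Sm x $$ (i,k)) \<in> Linfty \<mu>"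
      unfolding e using ik assms(1) by (intro goodm_entry[OF goodm_pow[OF gN]]) auto
  qed
  have detm: "(\<lambda>x. det (Sm x)) \<in> borel_measurable \<mu>" by (rule Linfty_meas[OF goodm_det[OF gS]])
  obtain c where c: "c > 0" "AE x in \<mu>. c \<le> cmod (det (Sm x))" using lbd unfolding lbf_def by blast
  have gX: "goodm \<mu> n Xm" unfolding Xm_def
    by (rule goodm_smult[OF goodm_adj[OF gS] Linfty_inv[OF detm c]])
  have AEinv: "AE x in \<mu>. Xm x * Sm x = 1\<^sub>m n \<and> Sm x * Xm x = 1\<^sub>m n"
    using c(2) proof eventually_elim
    case (elim x)
    then have d: "det (Sm x) \<noteq> 0" using c(1) by auto
    have "Xm x * Sm x = (1 / det (Sm x)) \<cdot>\<^sub>m (adj_mat (Sm x) * Sm x)"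
      unfolding Xm_def by (rule mult_smult_assoc_mat[OF adj_mat(1)[OF Sc] Sc])
    also have "\<dots> = 1\<^sub>m n" unfolding adj_mat(3)[OF Sc] using d by (intro eq_matI) auto
    finally have 1: "Xm x * Sm x = 1\<^sub>m n" .
    have "Sm x * Xm x = (1 / det (Sm x)) \<cdot>\<^sub>m (Sm x * adj_mat (Sm x))"
      unfolding Xm_def by (rule mult_smult_distrib[OF Sc adj_mat(1)[OF Sc]])
    also have "\<dots> = 1\<^sub>m n" unfolding adj_mat(2)[OF Sc] using d by (intro eq_matI) auto
    finally show ?case using 1 by simp
  qed
  define X where "X = mult_opmat n (\<lambda>i j x. Xm x $$ (i,j))"
  define Y where "Y = mult_opmat n (\<lambda>i j x. Sm x $$ (i,j))"
  define A where "A = mult_opmat n (\<lambda>i j. if i = j then \<phi> else if i < j then \<phi>ij i j else (\<lambda>_. 0))"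
  define T where "T = mult_opmat n (\<lambda>i j. if i = j then \<phi> else if j = i + 1 then (\<lambda>_. 1) else (\<lambda>_. (0::complex)))"
  have bX: "bounded_op \<mu> n X" unfolding X_def
    by (intro mult_opmat_bounded[OF assms(3)] goodm_entry[OF gX])
  have bY: "bounded_op \<mu> n Y" unfolding Y_def
    by (intro mult_opmat_bounded[OF assms(3)] goodm_entry[OF gS])
  have vX: "vec n (\<lambda>i. X g x i) = Xm x *\<^sub>v vec n (\<lambda>j. g x j)" for g x
    unfolding X_def by (rule opmat_vecv[OF Xc]) simp
  have vY: "vec n (\<lambda>i. Y g x i) = Sm x *\<^sub>v vec n (\<lambda>j. g x j)" for g x
    unfolding Y_def by (rule opmat_vecv[OF Sc]) simp
  have vA: "vec n (\<lambda>i. A g x i) = Am x *\<^sub>v vec n (\<lambda>j. g x j)" for g x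
    unfolding A_def by (rule opmat_vecv[OF Ac]) (simp add: Am_def)
  have vT: "vec n (\<lambda>i. T g x i) = Tm x *\<^sub>v vec n (\<lambda>j. g x j)" for g x
    unfolding T_def by (rule opmat_vecv[OF Tc]) (simp add: Tm_def)
  have ev: "F i = vec n (\<lambda>i. F i) $ i" if "i < n" for F :: "nat \<Rightarrow> complex" and i
    using that by simp
  have vc: "vec n (\<lambda>j. g x j) \<in> carrier_vec n" for g :: "'a \<Rightarrow> nat \<Rightarrow> complex" and x by simp
  have XY: "op_eq \<mu> n (X \<circ> Y) id" unfolding op_eq_def L2eqv_def
  proof (intro ballI allI impI)
    fix f i assume i: "i < n"
    show "AE x in \<mu>. (X \<circ> Y) f x i = id f x i"
      using AEinv proof eventually_elim
      case (elim x)
      have "(X \<circ> Y) f x i = vec n (\<lambda>i. X (Y f) x i) $ i" using i by simp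
      also have "\<dots> = ((Xm x * Sm x) *\<^sub>v vec n (\<lambda>j. f x j)) $ i"
        unfolding vX vY using Xc Sc by (subst assoc_mult_mat_vec[OF Xc Sc vc]) simp
      also have "\<dots> = f x i" using elim i by simp
      finally show ?case by simp
    qed
  qed
  have YX: "op_eq \<mu> n (Y \<circ> X) id" unfolding op_eq_def L2eqv_def
  proof (intro ballI allI impI)
    fix f i assume i: "i < n"
    show "AE x in \<mu>. (Y \<circ> X) f x i = id f x i"
      using AEinv proof eventually_elim
      case (elim x)
      have "(Y \<circ> X) f x i = vec n (\<lambda>i. Y (X f) x i) $ i" using i by simp
      also have "\<dots> = ((Sm x * Xm x) *\<^sub>v vec n (\<lambda>j. f x j)) $ i"
        unfolding vX vY using Xc Sc by (subst assoc_mult_mat_vec[OF Sc Xc vc]) simp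
      also have "\<dots> = f x i" using elim i by simp
      finally show ?case by simp
    qed
  qed
  have XAY: "op_eq \<mu> n (X \<circ> A \<circ> Y) T" unfolding op_eq_def L2eqv_def
  proof (intro ballI allI impI)
    fix f i assume i: "i < n"
    show "AE x in \<mu>. (X \<circ> A \<circ> Y) f x i = T f x i"
      using AEinv proof eventually_elim
      case (elim x)
      let ?v = "vec n (\<lambda>j. f x j)"
      have "(X \<circ> A \<circ> Y) f x i = vec n (\<lambda>i. X (A (Y f)) x i) $ i" using i by simp
      also have "\<dots> = (Xm x *\<^sub>v (Am x *\<^sub>v (Sm x *\<^sub>v ?v))) $ i"
        unfolding vX vA vY ..
      also have "Xm x *\<^sub>v (Am x *\<^sub>v (Sm x *\<^sub>v ?v)) = Xm x *\<^sub>v ((Am x * Sm x) *\<^sub>v ?v)"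
        by (simp add: assoc_mult_mat_vec[OF Ac Sc vc])
      also have "\<dots> = Xm x *\<^sub>v ((Sm x * Tm x) *\<^sub>v ?v)" unfolding AS ..
      also have "\<dots> = Xm x *\<^sub>v (Sm x *\<^sub>v (Tm x *\<^sub>v ?v))"
        by (simp add: assoc_mult_mat_vec[OF Sc Tc vc])
      also have "\<dots> = (Xm x * Sm x) *\<^sub>v (Tm x *\<^sub>v ?v)"
        by (rule assoc_mult_mat_vec[OF Xc Sc, symmetric]) (rule mult_mat_vec_carrier[OF Tc vc])
      also have "\<dots> = Tm x *\<^sub>v ?v" using elim one_mult_mat_vec[OF mult_mat_vec_carrier[OF Tc vc]] by simp
      also have "\<dots> = vec n (\<lambda>i. T f x i)" unfolding vT ..
      finally show ?case using i by simp
    qed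
  qed
  show ?thesis using bX bY XY YX XAY unfolding A_def T_def by blast
qed

end
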